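(* Let $\alpha>0$ be real. If $\alpha=1$ let $\mathcal X=\mathbb{CP}^1$ and $f(x)=1-x$; if $\alpha\neq1$ let $\mathcal X=(0,1)\subset\mathbb R$ and $f(x)=(1-x^\alpha)^{1/\alpha}$, so that in both cases $x^\alpha+f(x)^\alpha=1$. Let $S(x,y)=(u,v)=\big(x f(y)/f(xy),\,xy\big)$. Then: (i) $f(u)f(v)=f(x)$ for all $x,y$, with $(u,v)=S(x,y)$ (hence $S$ is a pentagon map); (ii) $S$ preserves the Poisson structure $\Omega=m(x,y)\,\partial x\wedge\partial y$ with $m(x,y)=y\,f(y)^{\alpha-1}f(x)^\alpha$, i.e. $m(u,v)/m(x,y)$ equals the Jacobian determinant $\det\frac{\partial(u,v)}{\partial(x,y)}$; (iii) $I(x,y)=x f(y)$ is invariant: $I(u,v)=I(x,y)$. Consequently $S$ is a Liouville integrable map.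
   Context: A map of the plane is Liouville integrable (in the sense of Veselov) if it preserves a Poisson structure and admits a functionally independent invariant function (one suffices in two dimensions). Pentagon map: for $S:Y\times Y\to Y\times Y$, with $S_{12}=S\times\mathrm{id}$, $S_{23}=\mathrm{id}\times S$, $S_{13}(y_1,y_2,y_3)=(p,y_2,q)$ where $(p,q)=S(y_1,y_3)$, one requires $S_{12}S_{13}S_{23}=S_{23}S_{12}$. *)

theory Defs
  imports "HOL-Analysis.Analysis"
begin

definition fR :: "real \<Rightarrow> real \<Rightarrow> real" where
  "fR \<alpha> x = (1 - x powr \<alpha>) powr (1 / \<alpha>)"

definition SR :: "real \<Rightarrow> real \<times> real \<Rightarrow> real \<times> real" where
  "SR \<alpha> p = (fst p * fR \<alpha> (snd p) / fR \<alpha> (fst p * snd p), fst p * snd p)"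

definition mR :: "real \<Rightarrow> real \<times> real \<Rightarrow> real" where
  "mR \<alpha> p = snd p * fR \<alpha> (snd p) powr (\<alpha> - 1) * fR \<alpha> (fst p) powr \<alpha>"

definition IR :: "real \<Rightarrow> real \<times> real \<Rightarrow> real" where
  "IR \<alpha> p = fst p * fR \<alpha> (snd p)"

section \<open>Case alpha = 1: rational map, affine chart of CP^1 x CP^1\<close>

definition fC :: "complex \<Rightarrow> complex" where
  "fC x = 1 - x"

definition SC :: "complex \<times> complex \<Rightarrow> complex \<times> complex" where
  "SC p = (fst p * fC (snd p) / fC (fst p * snd p), fst p * snd p)"

definition mC :: "complex \<times> complex \<Rightarrow> complex" where
  "mC p = snd p * fC (snd p) ^ 0 * fC (fst p)"

definition IC :: "complex \<times> complex \<Rightarrow> complex" where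
  "IC p = fst p * fC (snd p)"

definition jac :: "('a::real_normed_field \<times> 'a \<Rightarrow> 'a \<times> 'a) \<Rightarrow> 'a" where
  "jac D = fst (D (1,0)) * snd (D (0,1)) - fst (D (0,1)) * snd (D (1,0))"

end

theory Submission
  imports Defs
begin

definition fd :: "real \<Rightarrow> real \<Rightarrow> real" where
  "fd \<alpha> t = - (t powr (\<alpha> - 1) * fR \<alpha> t powr (1 - \<alpha>))"

lemma tp_lt1: "\<alpha> > 0 \<Longrightarrow> 0 < t \<Longrightarrow> t < (1::real) \<Longrightarrow> t powr \<alpha> < 1"
  using powr_less_mono2[of \<alpha> t 1] by simp

lemma fR_pos: "\<alpha> > 0 \<Longrightarrow> 0 < t \<Longrightarrow> t < 1 \<Longrightarrow> fR \<alpha> t > 0"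
  unfolding fR_def using tp_lt1[of \<alpha> t] by simp

lemma fR_lt1: "\<alpha> > 0 \<Longrightarrow> 0 < t \<Longrightarrow> t < 1 \<Longrightarrow> fR \<alpha> t < 1"
  unfolding fR_def using tp_lt1[of \<alpha> t] tp_lt1[of "1/\<alpha>" "1 - t powr \<alpha>"] by simp

lemma fR_pow: "\<alpha> > 0 \<Longrightarrow> 0 < t \<Longrightarrow> t < 1 \<Longrightarrow> fR \<alpha> t powr \<alpha> = 1 - t powr \<alpha>"
  unfolding fR_def using tp_lt1[of \<alpha> t] by (simp add: powr_powr)

lemma fR_deriv:
  assumes "\<alpha> > 0" "0 < t" "t < 1"
  shows "(fR \<alpha> has_real_derivative fd \<alpha> t) (at t)"
proof -
  have p: "1 - t powr \<alpha> > 0" using tp_lt1[of \<alpha> t] assms by simp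
  have "((\<lambda>t. (1 - t powr \<alpha>) powr (1/\<alpha>)) has_real_derivative
      (1/\<alpha>) * (1 - t powr \<alpha>) powr (1/\<alpha> - of_nat 1) * (0 - \<alpha> * t powr (\<alpha> - 1))) (at t)"
    by (intro DERIV_fun_powr derivative_intros has_real_derivative_powr assms p)
  moreover have "(1/\<alpha>) * (1 - t powr \<alpha>) powr (1/\<alpha> - of_nat 1) * (0 - \<alpha> * t powr (\<alpha> - 1)) = fd \<alpha> t"
  proof -
    have "(1 - t powr \<alpha>) powr (1/\<alpha> - 1) = fR \<alpha> t powr (1 - \<alpha>)"
      unfolding fR_def using p assms by (simp add: powr_powr field_simps)
    then show ?thesis using assms unfolding fd_def by simp
  qed
  ultimately show ?thesis unfolding fR_def[abs_def] by simp
qed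

lemma fR_comp:
  assumes "\<alpha> > 0" "(g has_derivative g') (at p)" "0 < g p" "g p < 1"
  shows "((\<lambda>p. fR \<alpha> (g p)) has_derivative (\<lambda>h. fd \<alpha> (g p) * g' h)) (at p)"
  using has_derivative_compose[OF assms(2) has_field_derivative_imp_has_derivative[OF fR_deriv[OF assms(1,3,4)]]] .

lemma real_case:
  assumes a: "\<alpha> > 0" and x: "0 < x" "x < 1" and y: "0 < y" "y < 1"
  shows "SR \<alpha> (x,y) \<in> {0<..<1} \<times> {0<..<1}
       \<and> fR \<alpha> (fst (SR \<alpha> (x,y))) * fR \<alpha> (snd (SR \<alpha> (x,y))) = fR \<alpha> x
       \<and> IR \<alpha> (SR \<alpha> (x,y)) = IR \<alpha> (x,y)
       \<and> (\<exists>D. (SR \<alpha> has_derivative D) (at (x,y)) \<and> jac D = mR \<alpha> (SR \<alpha> (x,y)) / mR \<alpha> (x,y))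
       \<and> (\<exists>D. (IR \<alpha> has_derivative D) (at (x,y)) \<and> D \<noteq> (\<lambda>_. 0))"
proof -
  define A where "A = fR \<alpha> y"
  define B where "B = fR \<alpha> (x*y)"
  define C where "C = fR \<alpha> x"
  define u where "u = x * A / B"
  have xy: "0 < x*y" "x*y < 1" using x y mult_strict_mono[of x 1 y 1] by auto
  have A: "A > 0" "A < 1" "A powr \<alpha> = 1 - y powr \<alpha>" unfolding A_def using fR_pos fR_lt1 fR_pow a y by auto
  have B: "B > 0" "B < 1" "B powr \<alpha> = 1 - x powr \<alpha> * y powr \<alpha>" unfolding B_def using fR_pos fR_lt1 fR_pow[OF a xy] a xy
    by (auto simp: powr_mult)
  have C: "C > 0" "C < 1" "C powr \<alpha> = 1 - x powr \<alpha>" unfolding C_def using fR_pos fR_lt1 fR_pow a x by auto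
  have xa: "0 < x powr \<alpha>" "x powr \<alpha> < 1" using x a tp_lt1 by auto
  have ya: "0 < y powr \<alpha>" "y powr \<alpha> < 1" using y a tp_lt1 by auto
  have xya: "x powr \<alpha> * y powr \<alpha> < 1" using xa ya mult_strict_mono[of "x powr \<alpha>" 1 "y powr \<alpha>" 1] by auto
  have SR: "SR \<alpha> (x,y) = (u, x*y)" unfolding SR_def u_def A_def B_def by simp
  have upos: "u > 0" unfolding u_def using A B x by simp
  have ua: "u powr \<alpha> = x powr \<alpha> * (1 - y powr \<alpha>) / (1 - x powr \<alpha> * y powr \<alpha>)"
    unfolding u_def using A B x by (simp add: powr_mult powr_divide)
  have "u powr \<alpha> < 1" unfolding ua using xa ya xya
    by (simp add: divide_less_eq mult_less_cancel_right1 algebra_simps)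
  hence ult: "u < 1"
  proof (rule contrapos_pp)
    assume "\<not> u < 1"
    then have "1 powr \<alpha> \<le> u powr \<alpha>" using powr_mono2[of \<alpha> 1 u] a by auto
    then show "\<not> u powr \<alpha> < 1" by simp
  qed
  have fu: "fR \<alpha> u = C / B"
  proof -
    have e: "(C/B) powr \<alpha> = (1 - x powr \<alpha>)/(1 - x powr \<alpha> * y powr \<alpha>)" using B C by (simp add: powr_divide)
    have ne: "1 - x powr \<alpha> * y powr \<alpha> \<noteq> 0" using xya by simp
    have "1 - u powr \<alpha> = (C/B) powr \<alpha>" unfolding ua e using ne
      by (simp add: field_simps)
    then show ?thesis unfolding fR_def using B C a by (simp add: powr_powr)
  qed
  have p1: "SR \<alpha> (x,y) \<in> {0<..<1} \<times> {0<..<1}" using SR upos ult xy by simp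
  have p2: "fR \<alpha> (fst (SR \<alpha> (x,y))) * fR \<alpha> (snd (SR \<alpha> (x,y))) = fR \<alpha> x"
    using SR fu B C unfolding B_def C_def by simp
  have p3: "IR \<alpha> (SR \<alpha> (x,y)) = IR \<alpha> (x,y)" using SR B unfolding IR_def u_def A_def B_def by simp
  have d_fst: "(fst has_derivative fst) (at (x,y))" by (simp add: bounded_linear_imp_has_derivative bounded_linear_fst)
  have d_snd: "(snd has_derivative snd) (at (x,y))" by (simp add: bounded_linear_imp_has_derivative bounded_linear_snd)
  have d_xy: "((\<lambda>p. fst p * snd p) has_derivative (\<lambda>h. fst p * snd h + fst h * snd p)) (at p)" for p :: "real \<times> real"
    using has_derivative_mult[OF bounded_linear_imp_has_derivative[OF bounded_linear_fst] bounded_linear_imp_has_derivative[OF bounded_linear_snd]] by blast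
  have d1: "((\<lambda>p. fR \<alpha> (snd p)) has_derivative (\<lambda>h. fd \<alpha> y * snd h)) (at (x,y))"
    using fR_comp[OF a d_snd] y by simp
  have d2: "((\<lambda>p. fR \<alpha> (fst p * snd p)) has_derivative (\<lambda>h. fd \<alpha> (x*y) * (x * snd h + fst h * y))) (at (x,y))"
    using fR_comp[OF a d_xy[of "(x,y)"]] xy by simp
  have dI: "(IR \<alpha> has_derivative (\<lambda>h. x * (fd \<alpha> y * snd h) + fst h * A)) (at (x,y))"
    using has_derivative_mult[OF d_fst d1] unfolding IR_def[abs_def] A_def by simp
  have p5: "\<exists>D. (IR \<alpha> has_derivative D) (at (x,y)) \<and> D \<noteq> (\<lambda>_. 0)"
  proof (intro exI conjI)
    show "(\<lambda>h. x * (fd \<alpha> y * snd h) + fst h * A) \<noteq> (\<lambda>_. 0)"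
    proof
      assume "(\<lambda>h::real\<times>real. x * (fd \<alpha> y * snd h) + fst h * A) = (\<lambda>_. 0)"
      from fun_cong[OF this, of "(1,0)"] show False using A by simp
    qed
  qed (rule dI)
  define D where "D = (\<lambda>h::real\<times>real. (((fst h * A + x * (fd \<alpha> y * snd h)) * B - x * A * (fd \<alpha> (x*y) * (x * snd h + fst h * y))) / B^2,
       x * snd h + fst h * y))"
  have SRf: "SR \<alpha> = (\<lambda>p. (fst p * fR \<alpha> (snd p) / fR \<alpha> (fst p * snd p), fst p * snd p))"
    unfolding SR_def[abs_def] by simp
  have dS: "(SR \<alpha> has_derivative D) (at (x,y))"
    unfolding SRf
    apply (rule has_derivative_eq_rhs)
     apply (rule has_derivative_Pair[OF has_derivative_divide[OF has_derivative_mult[OF d_fst d1] d2] d_xy])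
    using B unfolding D_def A_def B_def by (auto simp: field_simps power2_eq_square)
  have jD: "jac D = x * A powr (1 - \<alpha>) / B"
  proof -
    have "jac D = x * (A - y * fd \<alpha> y) / B"
      unfolding jac_def D_def using B by (simp add: field_simps power2_eq_square)
    also have "A - y * fd \<alpha> y = A powr (1 - \<alpha>)"
    proof -
      have "y * y powr (\<alpha> - 1) = y powr \<alpha>" using y by (simp add: powr_mult_base)
      hence h1: "A - y * fd \<alpha> y = A + y powr \<alpha> * A powr (1 - \<alpha>)" unfolding fd_def A_def by (simp add: algebra_simps)
      have eA: "A = A powr \<alpha> * A powr (1 - \<alpha>)" using A(1) by (simp add: powr_add[symmetric])
      have h3: "A powr \<alpha> * A powr (1 - \<alpha>) + y powr \<alpha> * A powr (1 - \<alpha>) = A powr (1 - \<alpha>)"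
        using A(3) by (metis diff_add_cancel distrib_right mult_1)
      show ?thesis using h1 eA h3 by linarith
    qed
    finally show ?thesis .
  qed
  have mq: "mR \<alpha> (SR \<alpha> (x,y)) / mR \<alpha> (x,y) = x * A powr (1 - \<alpha>) / B"
  proof -
    have "mR \<alpha> (SR \<alpha> (x,y)) = x * y * B powr (\<alpha> - 1) * (C/B) powr \<alpha>"
      by (simp add: mR_def SR fu B_def)
    also have "\<dots> = x * y * C powr \<alpha> / B" using B(1) C(1)
      by (simp add: powr_divide powr_diff)
    finally have n: "mR \<alpha> (SR \<alpha> (x,y)) = x * y * C powr \<alpha> / B" .
    have d: "mR \<alpha> (x,y) = y * A powr (\<alpha> - 1) * C powr \<alpha>" unfolding mR_def A_def C_def by simp
    have i: "A powr (1 - \<alpha>) * A powr (\<alpha> - 1) = 1" using A by (simp add: powr_add[symmetric])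
    show ?thesis unfolding n d using A B C y i by (simp add: field_simps)
  qed
  show ?thesis using p1 p2 p3 p5 dS jD mq by auto
qed

lemma complex_case:
  fixes x y :: complex
  assumes xy: "x * y \<noteq> 1"
  shows "fC (fst (SC (x,y))) * fC (snd (SC (x,y))) = fC x
       \<and> IC (SC (x,y)) = IC (x,y)
       \<and> (y \<noteq> 0 \<and> x \<noteq> 1 \<longrightarrow>
            (\<exists>D. (SC has_derivative D) (at (x,y)) \<and> jac D = mC (SC (x,y)) / mC (x,y)))
       \<and> (y \<noteq> 1 \<longrightarrow> (\<exists>D. (IC has_derivative D) (at (x,y)) \<and> D \<noteq> (\<lambda>_. 0)))"
proof -
  have ne: "1 - x*y \<noteq> 0" using xy by simp
  have ne2: "1 + x*(x*(y*y)) - x*(y*2) \<noteq> 0"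
  proof -
    have "1 + x*(x*(y*y)) - x*(y*2) = (1 - x*y)*(1 - x*y)" by (simp add: algebra_simps)
    then show ?thesis using ne by simp
  qed
  have p1: "fC (fst (SC (x,y))) * fC (snd (SC (x,y))) = fC x"
    using ne by (simp add: SC_def fC_def field_simps)
  have p2: "IC (SC (x,y)) = IC (x,y)"
    using ne by (simp add: SC_def IC_def fC_def field_simps)
  have d_fst: "(fst has_derivative fst) (at (x,y))" by (simp add: bounded_linear_imp_has_derivative bounded_linear_fst)
  have d_snd: "(snd has_derivative snd) (at (x,y))" by (simp add: bounded_linear_imp_has_derivative bounded_linear_snd)
  have d_xy: "((\<lambda>p. fst p * snd p) has_derivative (\<lambda>h. fst p * snd h + fst h * snd p)) (at p)" for p :: "complex \<times> complex"
    using has_derivative_mult[OF bounded_linear_imp_has_derivative[OF bounded_linear_fst] bounded_linear_imp_has_derivative[OF bounded_linear_snd]] by blast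
  have d1: "((\<lambda>p. 1 - snd p) has_derivative (\<lambda>h. 0 - snd h)) (at (x,y))"
    by (rule has_derivative_diff[OF has_derivative_const d_snd])
  have d2: "((\<lambda>p. 1 - fst p * snd p) has_derivative (\<lambda>h. 0 - (x * snd h + fst h * y))) (at (x,y))"
    using has_derivative_diff[OF has_derivative_const d_xy[of "(x,y)"]] by simp
  have dI: "(IC has_derivative (\<lambda>h. x * (0 - snd h) + fst h * (1 - y))) (at (x,y))"
    using has_derivative_mult[OF d_fst d1] unfolding IC_def[abs_def] fC_def by simp
  have p4: "y \<noteq> 1 \<longrightarrow> (\<exists>D. (IC has_derivative D) (at (x,y)) \<and> D \<noteq> (\<lambda>_. 0))"
  proof (intro impI exI conjI)
    assume y1: "y \<noteq> 1"
    show "(\<lambda>h. x * (0 - snd h) + fst h * (1 - y)) \<noteq> (\<lambda>_. 0)"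
    proof
      assume "(\<lambda>h::complex\<times>complex. x * (0 - snd h) + fst h * (1 - y)) = (\<lambda>_. 0)"
      from fun_cong[OF this, of "(1,0)"] show False using y1 by simp
    qed
  qed (rule dI)
  define D where "D = (\<lambda>h::complex\<times>complex. (((fst h * (1 - y) + x * (0 - snd h)) * (1 - x*y) - x * (1 - y) * (0 - (x * snd h + fst h * y))) / ((1 - x*y) * (1 - x*y)),
       x * snd h + fst h * y))"
  have SCf: "SC = (\<lambda>p. (fst p * (1 - snd p) / (1 - fst p * snd p), fst p * snd p))"
    unfolding SC_def[abs_def] fC_def by simp
  have dS: "(SC has_derivative D) (at (x,y))"
    unfolding SCf
    apply (rule has_derivative_eq_rhs)
     apply (rule has_derivative_Pair[OF has_derivative_divide'[OF has_derivative_mult[OF d_fst d1] d2] d_xy])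
    using ne unfolding D_def by (auto simp: fC_def)
  have p3: "y \<noteq> 0 \<and> x \<noteq> 1 \<longrightarrow> (\<exists>D. (SC has_derivative D) (at (x,y)) \<and> jac D = mC (SC (x,y)) / mC (x,y))"
  proof (intro impI exI conjI)
    assume h: "y \<noteq> 0 \<and> x \<noteq> 1"
    have gen: "\<And>a b w :: complex. w \<noteq> 0 \<Longrightarrow> a*x - b*y = x*w \<Longrightarrow> a/(w*w)*x - b/(w*w)*y = x/w"
      by (simp add: field_simps)
    have n1: "(1*(1-y) + x*(0-0))*(1-x*y) - x*(1-y)*(0-(x*0+1*y)) = 1 - y" by (simp add: algebra_simps)
    have n2: "(0*(1-y) + x*(0-1))*(1-x*y) - x*(1-y)*(0-(x*1+0*y)) = x*(x-1)" by (simp add: algebra_simps)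
    have "jac D = (1-y)/((1-x*y)*(1-x*y)) * (x*1+0*y) - (x*(x-1))/((1-x*y)*(1-x*y)) * (x*0+1*y)"
      unfolding jac_def D_def fst_conv snd_conv n1 n2 by (rule refl)
    also have "\<dots> = (1-y)/((1-x*y)*(1-x*y)) * x - (x*(x-1))/((1-x*y)*(1-x*y)) * y"
      by (simp only: mult_1_right mult_1 mult_zero_left mult_zero_right add_0 add_0_right)
    also have "\<dots> = x / (1 - x*y)"
      by (rule gen[OF ne]) (simp add: algebra_simps)
    finally have jx: "jac D = x / (1 - x*y)" .
    have fu: "fC (x * fC y / fC (x*y)) = (1-x)/(1-x*y)" using ne
      by (simp add: fC_def field_simps)
    have m1: "mC (SC (x,y)) = x*y*((1-x)/(1-x*y))" unfolding mC_def SC_def fst_conv snd_conv fu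
      by simp
    have m2: "mC (x,y) = y*(1-x)" by (simp add: mC_def fC_def)
    have nz: "y*(1-x) \<noteq> 0" using h by simp
    have gen2: "\<And>w. x*y*((1-x)/w)/(y*(1-x)) = x/w"
    proof -
      fix w :: complex
      have "x*y*((1-x)/w)/(y*(1-x)) = (x/w) * ((y*(1-x))/(y*(1-x)))" by (simp add: ac_simps)
      also have "\<dots> = x/w" using nz by simp
      finally show "x*y*((1-x)/w)/(y*(1-x)) = x/w" .
    qed
    have "mC (SC (x,y)) / mC (x,y) = x / (1 - x*y)" unfolding m1 m2 by (rule gen2)
    then show "jac D = mC (SC (x,y)) / mC (x,y)" using jx by simp
  qed (rule dS)
  show ?thesis using p1 p2 p3 p4 by blast
qed

theorem mainTheorem4:
  fixes \<alpha> :: real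
  assumes "\<alpha> > 0"
  shows
   "(\<alpha> = 1 \<longrightarrow>
      (\<forall>x y :: complex. x * y \<noteq> 1 \<longrightarrow>
         fC (fst (SC (x,y))) * fC (snd (SC (x,y))) = fC x
       \<and> IC (SC (x,y)) = IC (x,y)
       \<and> (y \<noteq> 0 \<and> x \<noteq> 1 \<longrightarrow>
            (\<exists>D. (SC has_derivative D) (at (x,y)) \<and> jac D = mC (SC (x,y)) / mC (x,y)))
       \<and> (y \<noteq> 1 \<longrightarrow> (\<exists>D. (IC has_derivative D) (at (x,y)) \<and> D \<noteq> (\<lambda>_. 0)))))
  \<and> (\<alpha> \<noteq> 1 \<longrightarrow>
      (\<forall>x y :: real. 0 < x \<and> x < 1 \<and> 0 < y \<and> y < 1 \<longrightarrow>
         SR \<alpha> (x,y) \<in> {0<..<1} \<times> {0<..<1}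
       \<and> fR \<alpha> (fst (SR \<alpha> (x,y))) * fR \<alpha> (snd (SR \<alpha> (x,y))) = fR \<alpha> x
       \<and> IR \<alpha> (SR \<alpha> (x,y)) = IR \<alpha> (x,y)
       \<and> (\<exists>D. (SR \<alpha> has_derivative D) (at (x,y)) \<and> jac D = mR \<alpha> (SR \<alpha> (x,y)) / mR \<alpha> (x,y))
       \<and> (\<exists>D. (IR \<alpha> has_derivative D) (at (x,y)) \<and> D \<noteq> (\<lambda>_. 0))))"
  using real_case[OF assms] complex_case by blast

end
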